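(* Let $E_1$ and $E_2$ be balanced equations in the unknowns $x_1,x_2,x_3$, and write $t_{jk}=t_{jk}^{E_1,E_2}$. Then there is a polynomial $t\in\mathbb Z[X_1,X_2,X_3]$ with $$(t_{23},t_{31},t_{12})=t\,(X_1-1,X_2-1,X_3-1).$$
   Context: An equation is a pair $E=(u,v)$ of words over $\{x_1,x_2,x_3\}$; it is balanced if $|u|_x=|v|_x$ for every unknown $x$. For $E=(x_{i_1}\cdots x_{i_r},\,x_{j_1}\cdots x_{j_s})$, $S_{E,x_j}=\sum_{a:\,i_a=j}\prod_{t=1}^{a-1}X_{i_t}-\sum_{a:\,j_a=j}\prod_{t=1}^{a-1}X_{j_t}\in\mathbb Z[X_1,X_2,X_3]$ (empty product $=1$), and $t_{jk}^{E,E'}=S_{E,x_j}S_{E',x_k}-S_{E',x_j}S_{E,x_k}$. *)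

theory Defs
  imports "HOL-Computational_Algebra.Polynomial"
begin

datatype unknown = x1 | x2 | x3

text \<open>Z[X1,X2,X3] represented as ((Z[X1])[X2])[X3].\<close>
type_synonym mpoly3 = "int poly poly poly"

definition X1 :: mpoly3 where "X1 = [:[:[:0, 1:]:]:]"
definition X2 :: mpoly3 where "X2 = [:[:0, 1:]:]"
definition X3 :: mpoly3 where "X3 = [:0, 1:]"

fun Xv :: "unknown \<Rightarrow> mpoly3" where
  "Xv x1 = X1" | "Xv x2 = X2" | "Xv x3 = X3"

type_synonym equation = "unknown list \<times> unknown list"

definition balanced :: "equation \<Rightarrow> bool" where
  "balanced E \<longleftrightarrow> (\<forall>x. count_list (fst E) x = count_list (snd E) x)"

definition Sw :: "unknown list \<Rightarrow> unknown \<Rightarrow> mpoly3" where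
  "Sw w x = (\<Sum>a<length w. if w ! a = x then prod_list (map Xv (take a w)) else 0)"

definition S :: "equation \<Rightarrow> unknown \<Rightarrow> mpoly3" where
  "S E x = Sw (fst E) x - Sw (snd E) x"

definition tt :: "unknown \<Rightarrow> unknown \<Rightarrow> equation \<Rightarrow> equation \<Rightarrow> mpoly3" where
  "tt j k E E' = S E j * S E' k - S E' j * S E k"

end

theory Submission
  imports Defs "HOL-Computational_Algebra.Polynomial_Factorial"
begin

lemma Sw_snoc: "Sw (w @ [y]) x = Sw w x + (if y = x then prod_list (map Xv w) else 0)"
proof -
  have "(\<Sum>a<length w. if (w @ [y]) ! a = x then prod_list (map Xv (take a (w @ [y]))) else 0)
      = (\<Sum>a<length w. if w ! a = x then prod_list (map Xv (take a w)) else 0)"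
    by (intro sum.cong) (auto simp: nth_append)
  then show ?thesis unfolding Sw_def by (simp add: nth_append)
qed

lemma Sw_Nil: "Sw [] x = 0" unfolding Sw_def by simp

lemma tele: "Sw w x1 * (X1 - 1) + Sw w x2 * (X2 - 1) + Sw w x3 * (X3 - 1)
   = prod_list (map Xv w) - 1"
proof (induction w rule: rev_induct)
  case Nil then show ?case by (simp add: Sw_Nil)
next
  case (snoc y w)
  show ?case
    using snoc by (cases y) (auto simp: Sw_snoc algebra_simps)
qed

lemma bal_prod:
  assumes "balanced E"
  shows "prod_list (map Xv (fst E)) = prod_list (map Xv (snd E))"
proof -
  have "mset (fst E) = mset (snd E)"
    using assms unfolding balanced_def by (simp add: multiset_eq_iff count_mset)
  then show ?thesis
    by (metis mset_map prod_mset_prod_list)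
qed

lemma S_orth:
  assumes "balanced E"
  shows "S E x1 * (X1 - 1) + S E x2 * (X2 - 1) + S E x3 * (X3 - 1) = 0"
proof -
  have "S E x1 * (X1 - 1) + S E x2 * (X2 - 1) + S E x3 * (X3 - 1)
     = (Sw (fst E) x1 * (X1 - 1) + Sw (fst E) x2 * (X2 - 1) + Sw (fst E) x3 * (X3 - 1))
      - (Sw (snd E) x1 * (X1 - 1) + Sw (snd E) x2 * (X2 - 1) + Sw (snd E) x3 * (X3 - 1))"
    unfolding S_def by (simp add: algebra_simps)
  also have "\<dots> = 0" unfolding tele using bal_prod[OF assms] by simp
  finally show ?thesis .
qed

lemma p1_prime: "prime_elem (X1 - 1)"
proof -
  have "prime_elem [:-1, 1::int:]"
    by (rule prime_elem_linear_poly) auto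
  then have "prime_elem [:[:[:-1, 1::int:]:]:]"
    by (simp add: prime_elem_const_poly_iff)
  moreover have "X1 - 1 = [:[:[:-1, 1::int:]:]:]"
    unfolding X1_def by (simp add: one_pCons)
  ultimately show ?thesis by simp
qed

lemma not_dvd2: "\<not> (X1 - 1) dvd (X2 - 1)"
proof
  assume "(X1 - 1) dvd (X2 - 1)"
  moreover have "X1 - 1 = [:[:[:-1, 1::int:]:]:]"
    unfolding X1_def by (simp add: one_pCons)
  moreover have "X2 - 1 = [:[:[:-1::int:], 1:]:]"
    unfolding X2_def by (simp add: one_pCons)
  ultimately have "[:[:[:-1, 1::int:]:]:] dvd [:[:[:-1::int:], 1:]:]" by simp
  then have "\<forall>n na. [:-1, 1::int:] dvd coeff (coeff [:[:[:-1::int:], 1:]:] n) na"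
    by (simp add: const_poly_dvd_iff)
  then have "[:-1, 1::int:] dvd coeff (coeff [:[:[:-1::int:], 1:]:] 0) 1" by blast
  then have "[:-1, 1::int:] dvd 1" by simp
  then show False by (auto simp: is_unit_poly_iff)
qed

lemma not_dvd3: "\<not> (X1 - 1) dvd (X3 - 1)"
proof
  assume "(X1 - 1) dvd (X3 - 1)"
  moreover have "X1 - 1 = [:[:[:-1, 1::int:]:]:]"
    unfolding X1_def by (simp add: one_pCons)
  moreover have "X3 - 1 = [:-1, 1:]"
    unfolding X3_def by (simp add: one_pCons)
  ultimately have "[:[:[:-1, 1::int:]:]:] dvd [:-1, 1:]" by simp
  then have "[:[:-1, 1::int:]:] dvd 1"
    using const_poly_dvd_iff by (metis coeff_pCons_0 coeff_pCons_Suc one_pCons)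
  then show False by (auto simp: is_unit_poly_iff)
qed

theorem corollary4p11:
  fixes E1 E2 :: equation
  assumes "balanced E1" and "balanced E2"
  shows "\<exists>t :: mpoly3.
           tt x2 x3 E1 E2 = t * (X1 - 1) \<and>
           tt x3 x1 E1 E2 = t * (X2 - 1) \<and>
           tt x1 x2 E1 E2 = t * (X3 - 1)"
proof -
  define a1 where "a1 = X1 - 1"
  define a2 where "a2 = X2 - 1"
  define a3 where "a3 = X3 - 1"
  define s1 where "s1 = S E1 x1"
  define s2 where "s2 = S E1 x2"
  define s3 where "s3 = S E1 x3"
  define r1 where "r1 = S E2 x1"
  define r2 where "r2 = S E2 x2"
  define r3 where "r3 = S E2 x3"
  have o1: "s1 * a1 + s2 * a2 + s3 * a3 = 0"
    using S_orth[OF assms(1)] unfolding a1_def a2_def a3_def s1_def s2_def s3_def .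
  have o2: "r1 * a1 + r2 * a2 + r3 * a3 = 0"
    using S_orth[OF assms(2)] unfolding a1_def a2_def a3_def r1_def r2_def r3_def .
  define c1 where "c1 = tt x2 x3 E1 E2"
  define c2 where "c2 = tt x3 x1 E1 E2"
  define c3 where "c3 = tt x1 x2 E1 E2"
  have c1e: "c1 = s2 * r3 - r2 * s3" unfolding c1_def tt_def s2_def r3_def r2_def s3_def ..
  have c2e: "c2 = s3 * r1 - r3 * s1" unfolding c2_def tt_def s3_def r1_def r3_def s1_def ..
  have c3e: "c3 = s1 * r2 - r1 * s2" unfolding c3_def tt_def s1_def r2_def r1_def s2_def ..
  have "a1 * c2 - a2 * c1 = s3 * (r1 * a1 + r2 * a2 + r3 * a3) - r3 * (s1 * a1 + s2 * a2 + s3 * a3)"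
    unfolding c1e c2e by (simp add: algebra_simps)
  then have e2: "a1 * c2 = a2 * c1" using o1 o2 by simp
  have "a1 * c3 - a3 * c1 = r2 * (s1 * a1 + s2 * a2 + s3 * a3) - s2 * (r1 * a1 + r2 * a2 + r3 * a3)"
    unfolding c1e c3e by (simp add: algebra_simps)
  then have e3: "a1 * c3 = a3 * c1" using o1 o2 by simp
  have "a1 dvd a2 * c1" using e2 by (metis dvd_triv_left)
  then have "a1 dvd c1"
    using prime_elem_dvd_multD[OF p1_prime[folded a1_def]] not_dvd2[folded a1_def a2_def] by blast
  then obtain t where t: "c1 = t * a1" by (metis dvd_def mult.commute)
  have a1nz: "a1 \<noteq> 0" using p1_prime[folded a1_def] by (simp add: prime_elem_def)
  have "a1 * c2 = a1 * (t * a2)" using e2 t by (simp add: algebra_simps)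
  then have "c2 = t * a2" using a1nz by simp
  moreover have "a1 * c3 = a1 * (t * a3)" using e3 t by (simp add: algebra_simps)
  then have "c3 = t * a3" using a1nz by simp
  ultimately show ?thesis using t unfolding c1_def c2_def c3_def a1_def a2_def a3_def by blast
qed

end
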